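(* Let $\gamma > 1.562$. Let $I$ be a $\gamma$-stable instance of the Euclidean Steiner tree problem. Then the (unique) optimal Steiner tree $\mathrm{OPT}$ of $I$ contains no Steiner points, i.e. every vertex of $\mathrm{OPT}$ is a terminal.
   Context: An instance of the Euclidean Steiner tree problem consists of a finite set $V \subset \mathbb{R}^d$ of points, a set $T \subseteq V$ of terminals, and the complete graph on $V$ with edge weights $w_{uv} = \|u - v\|$ (Euclidean distance). Points of $V \setminus T$ are called Steiner points. A Steiner tree is a tree in this complete graph whose vertex set contains all of $T$ (it may contain some Steiner points); its weight is the sum of the weights of its edges. For $\gamma > 1$, the instance is $\gamma$-stable if it has a minimum-weight Steiner tree $\mathrm{OPT}$ such that for every function $w' : V \times V \to \mathbb{R}_{\ge 0}$ with $w_{uv} \le w'_{uv} \le \gamma w_{uv}$ for all $u,v \in V$, every minimum-weight Steiner tree with respect to the weights $w'$ is equal to $\mathrm{OPT}$ (the perturbed weights $w'$ need not be Euclidean or even metric). *)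

theory Defs
  imports "HOL-Analysis.Analysis"
begin

definition graph_edges :: "'a set \<Rightarrow> 'a set set" where
  "graph_edges A = {{u, v} | u v. u \<in> A \<and> v \<in> A \<and> u \<noteq> v}"

definition is_connected :: "'a set \<Rightarrow> 'a set set \<Rightarrow> bool" where
  "is_connected Vt E \<longleftrightarrow>
     (\<forall>u\<in>Vt. \<forall>v\<in>Vt. (u, v) \<in> {(x, y). {x, y} \<in> E}\<^sup>*)"

definition is_cycle :: "'a set set \<Rightarrow> 'a list \<Rightarrow> bool" where
  "is_cycle E vs \<longleftrightarrow> length vs \<ge> 3 \<and> distinct vs \<and>
     (\<forall>i. Suc i < length vs \<longrightarrow> {vs ! i, vs ! Suc i} \<in> E) \<and>
     {last vs, hd vs} \<in> E"

definition is_tree :: "'a set \<Rightarrow> 'a set set \<Rightarrow> bool" where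
  "is_tree Vt E \<longleftrightarrow> finite Vt \<and> Vt \<noteq> {} \<and> E \<subseteq> graph_edges Vt \<and>
     is_connected Vt E \<and> \<not> (\<exists>vs. is_cycle E vs)"

definition steiner_tree :: "'a set \<Rightarrow> 'a set \<Rightarrow> 'a set \<times> 'a set set \<Rightarrow> bool" where
  "steiner_tree V T S \<longleftrightarrow> is_tree (fst S) (snd S) \<and> T \<subseteq> fst S \<and> fst S \<subseteq> V"

definition tree_weight :: "('a set \<Rightarrow> real) \<Rightarrow> 'a set \<times> 'a set set \<Rightarrow> real" where
  "tree_weight w S = (\<Sum>e\<in>snd S. w e)"

definition min_steiner_tree ::
  "('a set \<Rightarrow> real) \<Rightarrow> 'a set \<Rightarrow> 'a set \<Rightarrow> 'a set \<times> 'a set set \<Rightarrow> bool" where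
  "min_steiner_tree w V T S \<longleftrightarrow> steiner_tree V T S \<and>
     (\<forall>S'. steiner_tree V T S' \<longrightarrow> tree_weight w S \<le> tree_weight w S')"

definition eucl_weight :: "'a::euclidean_space set \<Rightarrow> real" where
  "eucl_weight e = (SOME d. \<exists>u v. e = {u, v} \<and> d = dist u v)"

definition gamma_stable :: "real \<Rightarrow> 'a::euclidean_space set \<Rightarrow> 'a set \<Rightarrow> bool" where
  "gamma_stable \<gamma> V T \<longleftrightarrow>
     (\<exists>OPT. min_steiner_tree eucl_weight V T OPT \<and>
        (\<forall>w'. (\<forall>u\<in>V. \<forall>v\<in>V. u \<noteq> v \<longrightarrow>
                  dist u v \<le> w' {u, v} \<and> w' {u, v} \<le> \<gamma> * dist u v) \<longrightarrow>
              (\<forall>S. min_steiner_tree w' V T S \<longrightarrow> S = OPT)))"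

end

theory Submission
  imports Defs
begin


lemma sum_sq_pairs:
  fixes v :: "'b \<Rightarrow> 'a::real_inner"
  assumes "finite N"
  shows "(\<Sum>k\<in>N. \<Sum>j\<in>N. (norm (v k - v j))\<^sup>2)
     = 2 * real (card N) * (\<Sum>j\<in>N. (norm (v j))\<^sup>2) - 2 * (norm (\<Sum>j\<in>N. v j))\<^sup>2"
proof -
  have e: "(norm (x - y))\<^sup>2 = (norm x)\<^sup>2 + (norm y)\<^sup>2 - 2 * inner x y" for x y :: 'a
    by (simp add: power2_norm_eq_inner inner_diff_left inner_diff_right inner_commute)
  have "(\<Sum>k\<in>N. \<Sum>j\<in>N. (norm (v k - v j))\<^sup>2)
      = (\<Sum>k\<in>N. \<Sum>j\<in>N. (norm (v k))\<^sup>2 + (norm (v j))\<^sup>2 - 2 * inner (v k) (v j))"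
    by (simp add: e)
  also have "\<dots> = (\<Sum>k\<in>N. real (card N) * (norm (v k))\<^sup>2 + (\<Sum>j\<in>N. (norm (v j))\<^sup>2) - 2 * inner (v k) (\<Sum>j\<in>N. v j))"
    by (simp add: sum.distrib sum_subtractf sum_distrib_left inner_sum_right)
  also have "\<dots> = 2 * real (card N) * (\<Sum>j\<in>N. (norm (v j))\<^sup>2) - 2 * inner (\<Sum>j\<in>N. v j) (\<Sum>j\<in>N. v j)"
    by (simp add: sum.distrib sum_subtractf sum_distrib_left inner_sum_left mult.assoc)
  finally show ?thesis by (simp add: power2_norm_eq_inner)
qed

lemma geo0:
  fixes N :: "'a::euclidean_space set" and s :: 'a
  assumes fin: "finite N" and ne: "N \<noteq> {}" and sN: "s \<notin> N" and g: "\<gamma> > 3/2" and g2: "\<gamma> \<le> 2"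
    and A: "\<forall>a\<in>N. \<forall>b\<in>N. a \<noteq> b \<longrightarrow> \<gamma> * dist s a \<le> dist a b"
    and B: "\<forall>k\<in>N. \<gamma> * (\<Sum>j\<in>N. dist s j) \<le> (\<Sum>j\<in>N. dist k j)"
  shows False
proof -
  define d where "d = real (card N)"
  define L where "L = (\<Sum>j\<in>N. dist s j)"
  define Q where "Q = (\<Sum>j\<in>N. (dist s j)\<^sup>2)"
  have dpos: "d > 0" using fin ne by (simp add: d_def card_gt_0_iff)
  have S1: "d * (\<gamma> * L) \<le> (\<Sum>k\<in>N. \<Sum>j\<in>N. dist k j)"
  proof -
    have "(\<Sum>k\<in>N. \<gamma> * L) \<le> (\<Sum>k\<in>N. \<Sum>j\<in>N. dist k j)"
      using B by (intro sum_mono) (simp add: L_def)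
    then show ?thesis by (simp add: d_def)
  qed
  have S2: "(\<Sum>k\<in>N. \<Sum>j\<in>N. dist k j)\<^sup>2 \<le> d * d * (\<Sum>k\<in>N. \<Sum>j\<in>N. (dist k j)\<^sup>2)"
  proof -
    have "(\<Sum>k\<in>N. \<Sum>j\<in>N. dist k j) = (\<Sum>p\<in>N\<times>N. dist (fst p) (snd p))"
      by (simp add: sum.cartesian_product split_beta)
    moreover have "(\<Sum>k\<in>N. \<Sum>j\<in>N. (dist k j)\<^sup>2) = (\<Sum>p\<in>N\<times>N. (dist (fst p) (snd p))\<^sup>2)"
      by (simp add: sum.cartesian_product split_beta)
    moreover have "(\<Sum>p\<in>N\<times>N. dist (fst p) (snd p))\<^sup>2 \<le> (\<Sum>p\<in>N\<times>N. (dist (fst p) (snd p))\<^sup>2) * card (N \<times> N)"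
      by (rule sum_squared_le_sum_of_squares)
    moreover have "real (card (N \<times> N)) = d * d" by (simp add: d_def card_cartesian_product)
    ultimately show ?thesis by (simp add: mult.commute)
  qed
  have S3: "(\<Sum>k\<in>N. \<Sum>j\<in>N. (dist k j)\<^sup>2) \<le> 2 * d * Q"
  proof -
    have "(\<Sum>k\<in>N. \<Sum>j\<in>N. (dist k j)\<^sup>2) = (\<Sum>k\<in>N. \<Sum>j\<in>N. (norm ((k - s) - (j - s)))\<^sup>2)"
      by (simp add: dist_norm)
    also have "\<dots> = 2 * d * (\<Sum>j\<in>N. (norm (j - s))\<^sup>2) - 2 * (norm (\<Sum>j\<in>N. j - s))\<^sup>2"
      using sum_sq_pairs[OF fin, of "\<lambda>j. j - s"] by (simp add: d_def)
    also have "\<dots> \<le> 2 * d * Q" by (simp add: Q_def dist_norm norm_minus_commute)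
    finally show ?thesis .
  qed
  have S4: "\<gamma>\<^sup>2 * L\<^sup>2 \<le> 2 * d * Q"
  proof -
    have L0: "L \<ge> 0" by (simp add: L_def sum_nonneg)
    have "(d * (\<gamma> * L))\<^sup>2 \<le> (\<Sum>k\<in>N. \<Sum>j\<in>N. dist k j)\<^sup>2"
      using S1 dpos g L0 by (intro power_mono) auto
    also have "\<dots> \<le> d * d * (2 * d * Q)"
    proof -
      have "d * d * (\<Sum>k\<in>N. \<Sum>j\<in>N. (dist k j)\<^sup>2) \<le> d * d * (2 * d * Q)"
        using S3 dpos by (intro mult_left_mono) auto
      then show ?thesis using S2 by linarith
    qed
    finally have "d * d * (\<gamma>\<^sup>2 * L\<^sup>2) \<le> d * d * (2 * d * Q)"
      by (simp add: power2_eq_square algebra_simps)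
    then show ?thesis using dpos by simp
  qed
  have "Max (dist s ` N) \<in> dist s ` N" using fin ne by (intro Max_in) auto
  then obtain a0 where a0: "a0 \<in> N" and a0eq: "dist s a0 = Max (dist s ` N)" by auto
  have amax: "\<forall>j\<in>N. dist s j \<le> dist s a0" using fin a0eq by simp
  define M where "M = dist s a0"
  have Mpos: "M > 0" using a0 sN M_def by auto
  have low: "(\<gamma> - 1) * M \<le> dist s j" if "j \<in> N" for j
  proof (cases "j = a0")
    case True then show ?thesis using g g2 Mpos M_def by (simp add: algebra_simps)
  next
    case False
    have "\<gamma> * M \<le> dist a0 j" using A a0 that False M_def by auto
    moreover have "dist a0 j \<le> M + dist s j" using dist_triangle[of a0 j s] M_def
      by (simp add: dist_commute)
    ultimately show ?thesis by (simp add: algebra_simps)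
  qed
  have each: "(dist s j)\<^sup>2 \<le> \<gamma> * M * dist s j - (\<gamma> - 1) * M\<^sup>2" if "j \<in> N" for j
  proof -
    have "(dist s j - (\<gamma> - 1) * M) * (M - dist s j) \<ge> 0"
      using low[OF that] amax that M_def by (intro mult_nonneg_nonneg) auto
    then show ?thesis by (simp add: algebra_simps power2_eq_square)
  qed
  have S5: "Q \<le> \<gamma> * M * L - d * (\<gamma> - 1) * M\<^sup>2"
  proof -
    have "Q \<le> (\<Sum>j\<in>N. \<gamma> * M * dist s j - (\<gamma> - 1) * M\<^sup>2)"
      unfolding Q_def using each by (intro sum_mono) auto
    also have "\<dots> = \<gamma> * M * L - d * (\<gamma> - 1) * M\<^sup>2"
      by (simp add: sum_subtractf sum_distrib_left L_def d_def)
    finally show ?thesis .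
  qed
  have "\<gamma>\<^sup>2 * L\<^sup>2 \<le> 2 * d * (\<gamma> * M * L - d * (\<gamma> - 1) * M\<^sup>2)"
  proof -
    have "2 * d * Q \<le> 2 * d * (\<gamma> * M * L - d * (\<gamma> - 1) * M\<^sup>2)"
      using S5 dpos by (intro mult_left_mono) auto
    then show ?thesis using S4 by linarith
  qed
  moreover have "(\<gamma> * L - d * M)\<^sup>2 + d\<^sup>2 * M\<^sup>2 * (2 * \<gamma> - 3)
     = \<gamma>\<^sup>2 * L\<^sup>2 - 2 * d * (\<gamma> * M * L - d * (\<gamma> - 1) * M\<^sup>2)"
    by (simp add: power2_eq_square algebra_simps)
  ultimately have "(\<gamma> * L - d * M)\<^sup>2 + d\<^sup>2 * M\<^sup>2 * (2 * \<gamma> - 3) \<le> 0"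
    by linarith
  moreover have "d\<^sup>2 * M\<^sup>2 * (2 * \<gamma> - 3) > 0" using dpos Mpos g by simp
  ultimately show False using zero_le_power2[of "\<gamma> * L - d * M"] by linarith
qed

lemma geo:
  fixes N :: "'a::euclidean_space set" and s :: 'a
  assumes fin: "finite N" and ne: "N \<noteq> {}" and sN: "s \<notin> N" and g: "\<gamma> > 3/2"
    and A: "\<forall>a\<in>N. \<forall>b\<in>N. a \<noteq> b \<longrightarrow> \<gamma> * dist s a \<le> dist a b"
    and B: "\<forall>k\<in>N. \<gamma> * (\<Sum>j\<in>N. dist s j) \<le> (\<Sum>j\<in>N. dist k j)"
  shows False
proof -
  define g0 where "g0 = min \<gamma> 2"
  have le: "g0 * x \<le> \<gamma> * x" if "x \<ge> 0" for x
    using that g0_def by (intro mult_right_mono) auto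
  show False
  proof (rule geo0[OF fin ne sN, of g0])
    show "3/2 < g0" "g0 \<le> 2" using g g0_def by auto
    show "\<forall>a\<in>N. \<forall>b\<in>N. a \<noteq> b \<longrightarrow> g0 * dist s a \<le> dist a b"
      using A le[of "dist s _"] by (meson order_trans zero_le_dist)
    show "\<forall>k\<in>N. g0 * (\<Sum>j\<in>N. dist s j) \<le> (\<Sum>j\<in>N. dist k j)"
      using B le[of "\<Sum>j\<in>N. dist s j"] by (meson order_trans sum_nonneg zero_le_dist)
  qed
qed



definition adj :: "'a set set \<Rightarrow> ('a \<times> 'a) set" where
  "adj E = {(x, y). {x, y} \<in> E}"

lemma is_connected_adj: "is_connected Vt E \<longleftrightarrow> (\<forall>u\<in>Vt. \<forall>v\<in>Vt. (u, v) \<in> (adj E)\<^sup>*)"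
  by (simp add: is_connected_def adj_def)

lemma adj_sym: "(x, y) \<in> (adj E)\<^sup>* \<Longrightarrow> (y, x) \<in> (adj E)\<^sup>*"
proof -
  have "sym (adj E)" by (auto simp: sym_def adj_def insert_commute)
  then have "sym ((adj E)\<^sup>*)" by (rule sym_rtrancl)
  then show "(x, y) \<in> (adj E)\<^sup>* \<Longrightarrow> (y, x) \<in> (adj E)\<^sup>*" by (auto simp: sym_def)
qed

lemma adj_edge: "{x, y} \<in> E \<Longrightarrow> (x, y) \<in> (adj E)\<^sup>*"
  by (auto simp: adj_def)

lemma reroute:
  assumes "\<And>x y. {x, y} \<in> E \<Longrightarrow> (x, y) \<in> (adj E2)\<^sup>*"
    and "(u, v) \<in> (adj E)\<^sup>*"
  shows "(u, v) \<in> (adj E2)\<^sup>*"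
  using assms(2)
proof (induction rule: rtrancl_induct)
  case base then show ?case by simp
next
  case (step y z)
  then have "(y, z) \<in> (adj E2)\<^sup>*" using assms(1) by (simp add: adj_def)
  with step.IH show ?case by (rule rtrancl_trans)
qed

lemma cycle_path:
  assumes "is_cycle E vs"
  shows "(hd vs, last vs) \<in> (adj (E - {{last vs, hd vs}}))\<^sup>*"
proof -
  define n where "n = length vs"
  have n3: "n \<ge> 3" and dist: "distinct vs"
    and ed: "\<And>i. Suc i < n \<Longrightarrow> {vs ! i, vs ! Suc i} \<in> E"
    using assms by (auto simp: is_cycle_def n_def)
  have ne: "vs \<noteq> []" using n3 n_def by auto
  have hd: "hd vs = vs ! 0" using ne by (simp add: hd_conv_nth)
  have lst: "last vs = vs ! (n - 1)" using ne by (simp add: last_conv_nth n_def)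
  have "j < n \<Longrightarrow> (vs ! 0, vs ! j) \<in> (adj (E - {{last vs, hd vs}}))\<^sup>*" for j
  proof (induction j)
    case 0 then show ?case by simp
  next
    case (Suc j)
    have "{vs ! j, vs ! Suc j} \<noteq> {vs ! (n - 1), vs ! 0}"
    proof
      assume "{vs ! j, vs ! Suc j} = {vs ! (n - 1), vs ! 0}"
      then have "(vs ! j = vs ! (n - 1) \<and> vs ! Suc j = vs ! 0) \<or> (vs ! j = vs ! 0 \<and> vs ! Suc j = vs ! (n - 1))"
        by (simp add: doubleton_eq_iff)
      moreover have jl: "j < length vs" "n - 1 < length vs" "0 < length vs" "Suc j < length vs"
        using Suc.prems n3 by (auto simp: n_def)
      ultimately consider "vs ! j = vs ! (n - 1)" | "vs ! j = vs ! 0" "vs ! Suc j = vs ! (n - 1)" by blast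
      then show False
      proof cases
        case 1
        then have "j = n - 1" using nth_eq_iff_index_eq[OF dist jl(1) jl(2)] by simp
        then show False using Suc.prems by simp
      next
        case 2
        then have "j = 0" using nth_eq_iff_index_eq[OF dist jl(1) jl(3)] by simp
        moreover have "Suc j = n - 1" using 2(2) nth_eq_iff_index_eq[OF dist jl(4) jl(2)] by simp
        ultimately show False using n3 by simp
      qed
    qed
    then have "(vs ! j, vs ! Suc j) \<in> adj (E - {{last vs, hd vs}})"
      using ed[OF Suc.prems] hd lst by (simp add: adj_def)
    with Suc show ?case by (meson Suc_lessD rtrancl.rtrancl_into_rtrancl)
  qed
  from this[of "n - 1"] n3 show ?thesis by (simp add: hd lst)
qed

lemma finite_graph_edges: "finite A \<Longrightarrow> finite (graph_edges A)"
proof -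
  assume "finite A"
  moreover have "graph_edges A \<subseteq> Pow A" by (auto simp: graph_edges_def)
  ultimately show ?thesis by (meson finite_Pow_iff finite_subset)
qed

lemma spanning_tree:
  assumes fin: "finite Vt" and ne: "Vt \<noteq> {}" and sub: "E \<subseteq> graph_edges Vt"
    and con: "is_connected Vt E"
  shows "\<exists>E'\<subseteq>E. is_tree Vt E'"
proof -
  define C where "C = {E'. E' \<subseteq> E \<and> is_connected Vt E'}"
  have finE: "finite E" using sub fin finite_graph_edges finite_subset by blast
  have "finite C" unfolding C_def using finE by (auto intro: finite_subset[of _ "Pow E"])
  moreover have "C \<noteq> {}" using con by (auto simp: C_def)
  ultimately obtain E0 where "is_arg_min card (\<lambda>x. x \<in> C) E0"
    using ex_is_arg_min_if_finite by blast
  then have E0C: "E0 \<in> C" and E0min: "\<And>y. y \<in> C \<Longrightarrow> \<not> card y < card E0"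
    by (auto simp: is_arg_min_def)
  have E0E: "E0 \<subseteq> E" and con0: "is_connected Vt E0" using E0C by (auto simp: C_def)
  have finE0: "finite E0" using E0E finE finite_subset by blast
  have nocyc: "\<not> (\<exists>vs. is_cycle E0 vs)"
  proof
    assume "\<exists>vs. is_cycle E0 vs"
    then obtain vs where cyc: "is_cycle E0 vs" by blast
    define e where "e = {last vs, hd vs}"
    have eE0: "e \<in> E0" using cyc by (simp add: is_cycle_def e_def)
    have p: "(hd vs, last vs) \<in> (adj (E0 - {e}))\<^sup>*" using cycle_path[OF cyc] by (simp add: e_def)
    have "is_connected Vt (E0 - {e})"
      unfolding is_connected_adj
    proof (intro ballI)
      fix u v assume "u \<in> Vt" "v \<in> Vt"
      then have uv: "(u, v) \<in> (adj E0)\<^sup>*" using con0 by (simp add: is_connected_adj)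
      show "(u, v) \<in> (adj (E0 - {e}))\<^sup>*"
      proof (rule reroute[OF _ uv])
        fix x y assume xy: "{x, y} \<in> E0"
        show "(x, y) \<in> (adj (E0 - {e}))\<^sup>*"
        proof (cases "{x, y} = e")
          case True
          then have "(x = last vs \<and> y = hd vs) \<or> (x = hd vs \<and> y = last vs)"
            by (simp add: e_def doubleton_eq_iff)
          then show ?thesis using p adj_sym[OF p] by (elim disjE conjE) simp_all
        next
          case False then show ?thesis using xy by (intro adj_edge) simp
        qed
      qed
    qed
    then have "E0 - {e} \<in> C" using E0E by (auto simp: C_def)
    moreover have "card (E0 - {e}) < card E0" using finE0 eE0 by (rule card_Diff1_less)
    ultimately show False using E0min by blast
  qed
  have "E0 \<subseteq> graph_edges Vt" using E0E sub by (rule order_trans)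
  then have "is_tree Vt E0" using fin ne con0 nocyc unfolding is_tree_def by blast
  then show ?thesis using E0E by blast
qed

lemma eucl_weight_eq: "eucl_weight {u, v} = dist u v"
proof -
  have "\<exists>d. \<exists>u' v'. {u, v} = {u', v'} \<and> d = dist u' v'" by (intro exI conjI) (rule refl)+
  then have "\<exists>u' v'. {u, v} = {u', v'} \<and> eucl_weight {u, v} = dist u' v'"
    unfolding eucl_weight_def by (rule someI_ex)
  then obtain u' v' where "{u, v} = {u', v'}" "eucl_weight {u, v} = dist u' v'" by blast
  then show ?thesis by (auto simp: doubleton_eq_iff dist_commute)
qed

lemma eucl_weight_nonneg: "e \<in> graph_edges A \<Longrightarrow> eucl_weight e \<ge> 0"
  by (auto simp: graph_edges_def eucl_weight_eq)



theorem mainTheorem1: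
  fixes V T :: "'a::euclidean_space set" and \<gamma> :: real
    and OPT :: "'a set \<times> 'a set set"
  assumes "finite V" and "T \<subseteq> V" and "T \<noteq> {}"
    and "\<gamma> > 1.562"
    and "gamma_stable \<gamma> V T"
    and "min_steiner_tree eucl_weight V T OPT"
  shows "fst OPT \<subseteq> T"
proof (rule ccontr)
  assume notsub: "\<not> fst OPT \<subseteq> T"
  note finV = assms(1) and TV = assms(2) and Tne = assms(3) and g = assms(4)
  have g1: "\<gamma> > 1" and g32: "\<gamma> > 3/2" using g by auto
  obtain OPT0 where min0: "min_steiner_tree eucl_weight V T OPT0"
    and stab0: "\<And>w' S. (\<forall>u\<in>V. \<forall>v\<in>V. u \<noteq> v \<longrightarrow>
                  dist u v \<le> w' {u, v} \<and> w' {u, v} \<le> \<gamma> * dist u v) \<Longrightarrow>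
              min_steiner_tree w' V T S \<Longrightarrow> S = OPT0"
    using assms(5) unfolding gamma_stable_def by blast
  have "OPT = OPT0"
  proof (rule stab0[OF _ assms(6)])
    show "\<forall>u\<in>V. \<forall>v\<in>V. u \<noteq> v \<longrightarrow> dist u v \<le> eucl_weight {u, v} \<and> eucl_weight {u, v} \<le> \<gamma> * dist u v"
      using g1 by (simp add: eucl_weight_eq)
  qed
  then have stab: "\<And>w' S. (\<forall>u\<in>V. \<forall>v\<in>V. u \<noteq> v \<longrightarrow>
                  dist u v \<le> w' {u, v} \<and> w' {u, v} \<le> \<gamma> * dist u v) \<Longrightarrow>
              min_steiner_tree w' V T S \<Longrightarrow> S = OPT"
    using stab0 by blast
  obtain Vt E where OPTeq: "OPT = (Vt, E)" by (cases OPT)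
  have st: "steiner_tree V T (Vt, E)" using assms(6) OPTeq by (simp add: min_steiner_tree_def)
  then have finVt: "finite Vt" and Esub: "E \<subseteq> graph_edges Vt" and conE: "is_connected Vt E"
    and TVt: "T \<subseteq> Vt" and VtV: "Vt \<subseteq> V"
    by (simp_all add: steiner_tree_def is_tree_def)
  obtain s where sVt: "s \<in> Vt" and sT: "s \<notin> T" using notsub OPTeq by auto
  have finE: "finite E" using Esub finVt finite_graph_edges finite_subset by blast
  define w' where "w' e = (if e \<in> E then \<gamma> * eucl_weight e else eucl_weight e)" for e
  have adm: "\<forall>u\<in>V. \<forall>v\<in>V. u \<noteq> v \<longrightarrow> dist u v \<le> w' {u, v} \<and> w' {u, v} \<le> \<gamma> * dist u v"
    using g1 by (simp add: w'_def eucl_weight_eq)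
  have w'nn: "w' e \<ge> 0" if "e \<in> graph_edges A" for e A
    using eucl_weight_nonneg[OF that] g1 by (simp add: w'_def)
  have optmin: "tree_weight w' OPT \<le> tree_weight w' S" if "steiner_tree V T S" for S
  proof -
    define ST where "ST = {S. steiner_tree V T S}"
    have "ST \<subseteq> Pow V \<times> Pow (Pow V)"
    proof
      fix X assume "X \<in> ST"
      then have "fst X \<subseteq> V" "snd X \<subseteq> graph_edges (fst X)"
        by (simp_all add: ST_def steiner_tree_def is_tree_def)
      moreover have "graph_edges (fst X) \<subseteq> Pow (fst X)" by (auto simp: graph_edges_def)
      ultimately show "X \<in> Pow V \<times> Pow (Pow V)" by (cases X) auto
    qed
    then have "finite ST" using finV by (meson finite_Pow_iff finite_SigmaI finite_subset)
    moreover have "ST \<noteq> {}" using that unfolding ST_def by blast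
    ultimately obtain Mn where "is_arg_min (tree_weight w') (\<lambda>x. x \<in> ST) Mn"
      using ex_is_arg_min_if_finite by blast
    then have MnST: "Mn \<in> ST" and Mnmin: "\<And>y. y \<in> ST \<Longrightarrow> \<not> tree_weight w' y < tree_weight w' Mn"
      by (auto simp: is_arg_min_def)
    have "min_steiner_tree w' V T Mn"
      unfolding min_steiner_tree_def using MnST Mnmin by (auto simp: ST_def not_less)
    then have "Mn = OPT" using stab[OF adm] by blast
    then show ?thesis using Mnmin[of S] that by (simp add: ST_def not_less)
  qed
  have better: False
    if fin2: "finite Vt2" and ne2: "Vt2 \<noteq> {}" and sub2: "E2 \<subseteq> graph_edges Vt2"
      and con2: "is_connected Vt2 E2" and TV2: "T \<subseteq> Vt2" and V2: "Vt2 \<subseteq> V"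
      and lt: "(\<Sum>e\<in>E2. w' e) < (\<Sum>e\<in>E. w' e)" for Vt2 E2
  proof -
    obtain E3 where E32: "E3 \<subseteq> E2" and tr: "is_tree Vt2 E3"
      using spanning_tree[OF fin2 ne2 sub2 con2] by blast
    have "steiner_tree V T (Vt2, E3)" using tr TV2 V2 by (simp add: steiner_tree_def)
    then have "tree_weight w' OPT \<le> tree_weight w' (Vt2, E3)" by (rule optmin)
    also have "\<dots> \<le> (\<Sum>e\<in>E2. w' e)"
    proof -
      have "finite E2" using sub2 fin2 finite_graph_edges finite_subset by blast
      moreover have "\<forall>e\<in>E2 - E3. 0 \<le> w' e" using sub2 w'nn by blast
      ultimately show ?thesis unfolding tree_weight_def snd_conv using E32 by (intro sum_mono2) auto
    qed
    finally show False using lt OPTeq by (simp add: tree_weight_def)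
  qed
  define N where "N = {j. {s, j} \<in> E}"
  have edgeE: "\<And>x y. {x, y} \<in> E \<Longrightarrow> x \<in> Vt \<and> y \<in> Vt \<and> x \<noteq> y"
  proof -
    fix x y assume "{x, y} \<in> E"
    then have "{x, y} \<in> graph_edges Vt" using Esub by blast
    then obtain u v where "{x, y} = {u, v}" "u \<in> Vt" "v \<in> Vt" "u \<noteq> v"
      by (auto simp: graph_edges_def)
    then show "x \<in> Vt \<and> y \<in> Vt \<and> x \<noteq> y" by (auto simp: doubleton_eq_iff)
  qed
  have NVt: "N \<subseteq> Vt" using edgeE by (auto simp: N_def)
  have sN: "s \<notin> N" using edgeE[of s s] by (auto simp: N_def)
  have finN: "finite N" using NVt finVt finite_subset by blast
  have neN: "N \<noteq> {}"
  proof -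
    obtain t where t: "t \<in> T" using Tne by blast
    then have "t \<noteq> s" using sT by blast
    moreover have "(s, t) \<in> (adj E)\<^sup>*" using conE sVt t TVt by (auto simp: is_connected_adj)
    ultimately obtain z where "(s, z) \<in> adj E" by (metis converse_rtranclE)
    then show ?thesis by (auto simp: adj_def N_def)
  qed
  have A: "\<forall>a\<in>N. \<forall>b\<in>N. a \<noteq> b \<longrightarrow> \<gamma> * dist s a \<le> dist a b"
  proof (intro ballI impI)
    fix a b assume aN: "a \<in> N" and bN: "b \<in> N" and ab: "a \<noteq> b"
    show "\<gamma> * dist s a \<le> dist a b"
    proof (rule ccontr)
      assume "\<not> ?thesis" then have lt0: "dist a b < \<gamma> * dist s a" by simp
      define E2 where "E2 = insert {a, b} (E - {{s, a}})"
      have saE: "{s, a} \<in> E" "{s, b} \<in> E" using aN bN N_def by auto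
      have as: "a \<noteq> s" "b \<noteq> s" using aN bN sN by auto
      have aVt: "a \<in> Vt" "b \<in> Vt" using aN bN NVt by auto
      have sub2: "E2 \<subseteq> graph_edges Vt"
      proof -
        have "{a, b} \<in> graph_edges Vt" using aVt ab unfolding graph_edges_def by blast
        then show ?thesis using Esub unfolding E2_def by blast
      qed
      have sa: "(s, a) \<in> (adj E2)\<^sup>*"
      proof -
        have "{s, b} \<noteq> {s, a}" using ab as by (auto simp: doubleton_eq_iff)
        then have "(s, b) \<in> (adj E2)\<^sup>*" using saE(2) by (intro adj_edge) (simp add: E2_def)
        moreover have "(b, a) \<in> (adj E2)\<^sup>*" by (intro adj_edge) (simp add: E2_def insert_commute)
        ultimately show ?thesis by (rule rtrancl_trans)
      qed
      have con2: "is_connected Vt E2"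
        unfolding is_connected_adj
      proof (intro ballI)
        fix u v assume "u \<in> Vt" "v \<in> Vt"
        then have uv: "(u, v) \<in> (adj E)\<^sup>*" using conE by (simp add: is_connected_adj)
        show "(u, v) \<in> (adj E2)\<^sup>*"
        proof (rule reroute[OF _ uv])
          fix x y assume xy: "{x, y} \<in> E"
          show "(x, y) \<in> (adj E2)\<^sup>*"
          proof (cases "{x, y} = {s, a}")
            case True
            then have "(x = s \<and> y = a) \<or> (x = a \<and> y = s)" by (simp add: doubleton_eq_iff)
            then show ?thesis using sa adj_sym[OF sa] by (elim disjE conjE) simp_all
          next
            case False then show ?thesis using xy by (intro adj_edge) (simp add: E2_def)
          qed
        qed
      qed
      have wsa: "w' {s, a} = \<gamma> * dist s a" using saE by (simp add: w'_def eucl_weight_eq)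
      have sumE: "(\<Sum>e\<in>E. w' e) = \<gamma> * dist s a + (\<Sum>e\<in>E - {{s, a}}. w' e)"
        using sum.remove[OF finE saE(1), of w'] wsa by simp
      have sum2: "(\<Sum>e\<in>E2. w' e) \<le> (\<Sum>e\<in>E - {{s, a}}. w' e) + dist a b"
      proof (cases "{a, b} \<in> E - {{s, a}}")
        case True then have "E2 = E - {{s, a}}" by (auto simp: E2_def)
        then show ?thesis by simp
      next
        case False
        have "{a, b} \<noteq> {s, a}" using as ab by (auto simp: doubleton_eq_iff)
        with False have "{a, b} \<notin> E" by blast
        then have "w' {a, b} = dist a b" by (simp add: w'_def eucl_weight_eq)
        then show ?thesis using False finE by (simp add: E2_def)
      qed
      have "Vt \<noteq> {}" using sVt by blast
      moreover have "(\<Sum>e\<in>E2. w' e) < (\<Sum>e\<in>E. w' e)" using sumE sum2 lt0 by linarith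
      ultimately show False using better[OF finVt _ sub2 con2 TVt VtV] by blast
    qed
  qed
  have B: "\<forall>k\<in>N. \<gamma> * (\<Sum>j\<in>N. dist s j) \<le> (\<Sum>j\<in>N. dist k j)"
  proof (intro ballI)
    fix k assume kN: "k \<in> N"
    show "\<gamma> * (\<Sum>j\<in>N. dist s j) \<le> (\<Sum>j\<in>N. dist k j)"
    proof (rule ccontr)
      assume "\<not> ?thesis" then have lt0: "(\<Sum>j\<in>N. dist k j) < \<gamma> * (\<Sum>j\<in>N. dist s j)" by simp
      define Eold where "Eold = {e \<in> E. s \<notin> e}"
      define Enew where "Enew = (\<lambda>j. {k, j}) ` (N - {k})"
      define E2 where "E2 = Eold \<union> Enew"
      have kVt: "k \<in> Vt" "k \<noteq> s" using kN NVt sN by auto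
      have sub2: "E2 \<subseteq> graph_edges (Vt - {s})"
      proof
        fix e assume "e \<in> E2"
        then consider "e \<in> E" "s \<notin> e" | j where "j \<in> N" "j \<noteq> k" "e = {k, j}"
          unfolding E2_def Eold_def Enew_def by blast
        then show "e \<in> graph_edges (Vt - {s})"
        proof cases
          case 1
          then have "e \<in> graph_edges Vt" using Esub by blast
          then obtain u v where "e = {u, v}" "u \<in> Vt" "v \<in> Vt" "u \<noteq> v" by (auto simp: graph_edges_def)
          with 1 show ?thesis unfolding graph_edges_def by blast
        next
          case 2
          then have "j \<in> Vt - {s}" using NVt sN by blast
          then show ?thesis using 2 kVt unfolding graph_edges_def by blast
        qed
      qed
      have reach: "(k, y) \<in> (adj E)\<^sup>* \<Longrightarrow> y = s \<or> (k, y) \<in> (adj E2)\<^sup>*" for y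
      proof (induction rule: rtrancl_induct)
        case base then show ?case by simp
      next
        case (step y z)
        have yz: "{y, z} \<in> E" using step.hyps(2) by (simp add: adj_def)
        show ?case
        proof (cases "z = s")
          case True then show ?thesis by simp
        next
          case zs: False
          show ?thesis
          proof (cases "y = s")
            case True
            then have zN: "z \<in> N" using yz by (simp add: N_def)
            show ?thesis
            proof (cases "z = k")
              case True then show ?thesis by simp
            next
              case False
              then have "z \<in> N - {k}" using zN by simp
              then have "{k, z} \<in> Enew" unfolding Enew_def by (rule imageI)
              then have "{k, z} \<in> E2" by (simp add: E2_def)
              then show ?thesis using adj_edge[of k z E2] by simp
            qed
          next
            case False
            then have "s \<notin> {y, z}" using zs by simp
            then have "{y, z} \<in> Eold" using yz by (simp add: Eold_def)
            then have "{y, z} \<in> E2" by (simp add: E2_def)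
            then have "(y, z) \<in> adj E2" by (simp add: adj_def)
            moreover have "(k, y) \<in> (adj E2)\<^sup>*" using step.IH False by simp
            ultimately show ?thesis by (meson rtrancl.rtrancl_into_rtrancl)
          qed
        qed
      qed
      have con2: "is_connected (Vt - {s}) E2"
        unfolding is_connected_adj
      proof (intro ballI)
        fix u v assume u: "u \<in> Vt - {s}" and v: "v \<in> Vt - {s}"
        have ku: "(k, u) \<in> (adj E)\<^sup>*" using conE u kVt unfolding is_connected_adj by blast
        have kv: "(k, v) \<in> (adj E)\<^sup>*" using conE v kVt unfolding is_connected_adj by blast
        have "(k, u) \<in> (adj E2)\<^sup>*" using reach[OF ku] u by simp
        then have uk: "(u, k) \<in> (adj E2)\<^sup>*" by (rule adj_sym)
        have "(k, v) \<in> (adj E2)\<^sup>*" using reach[OF kv] v by simp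
        with uk
        show "(u, v) \<in> (adj E2)\<^sup>*" by (rule rtrancl_trans)
      qed
      define L where "L = (\<Sum>j\<in>N. dist s j)"
      define Star where "Star = {e \<in> E. s \<in> e}"
      have Stareq: "Star = (\<lambda>j. {s, j}) ` N"
      proof
        show "Star \<subseteq> (\<lambda>j. {s, j}) ` N"
        proof
          fix e assume "e \<in> Star"
          then have eE: "e \<in> E" and se: "s \<in> e" by (auto simp: Star_def)
          have "e \<in> graph_edges Vt" using eE Esub by blast
          then obtain u v where uv: "e = {u, v}" unfolding graph_edges_def by blast
          have "e = {s, v} \<or> e = {s, u}" using se uv by (cases "s = u") (simp_all add: insert_commute)
          then show "e \<in> (\<lambda>j. {s, j}) ` N"
          proof
            assume h: "e = {s, v}"
            then have "v \<in> N" using eE by (simp add: N_def)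
            then show ?thesis using image_eqI[of e "\<lambda>j. {s, j}" v N] h by simp
          next
            assume h: "e = {s, u}"
            then have "u \<in> N" using eE by (simp add: N_def)
            then show ?thesis using image_eqI[of e "\<lambda>j. {s, j}" u N] h by simp
          qed
        qed
        show "(\<lambda>j. {s, j}) ` N \<subseteq> Star" by (auto simp: Star_def N_def)
      qed
      have injS: "inj_on (\<lambda>j. {s, j}) N" using sN by (auto simp: inj_on_def doubleton_eq_iff)
      have sumStar: "(\<Sum>e\<in>Star. w' e) = \<gamma> * L"
      proof -
        have "(\<Sum>e\<in>Star. w' e) = (\<Sum>j\<in>N. w' {s, j})"
          unfolding Stareq using sum.reindex[OF injS, of w'] by (simp add: comp_def)
        also have "\<dots> = (\<Sum>j\<in>N. \<gamma> * dist s j)"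
          by (intro sum.cong) (auto simp: N_def w'_def eucl_weight_eq)
        finally show ?thesis by (simp add: L_def sum_distrib_left)
      qed
      have finEold: "finite Eold" using finE by (simp add: Eold_def)
      have finStar: "finite Star" using finE by (simp add: Star_def)
      have EoS: "E = Eold \<union> Star" "Eold \<inter> Star = {}" by (auto simp: Eold_def Star_def)
      have sumE: "(\<Sum>e\<in>E. w' e) = (\<Sum>e\<in>Eold. w' e) + \<gamma> * L"
        using sum.union_disjoint[OF finEold finStar EoS(2), of w'] EoS(1) sumStar by simp
      have finEnew: "finite Enew" using finN by (simp add: Enew_def)
      have newE: "e \<notin> E" if "e \<in> Enew - Eold" for e
      proof
        assume eE: "e \<in> E"
        from that obtain j where j: "j \<in> N - {k}" "e = {k, j}" and eO: "e \<notin> Eold"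
          unfolding Enew_def by blast
        have "j \<noteq> s" using j sN by blast
        then have "s \<notin> e" using j kVt by simp
        then have "e \<in> Eold" using eE by (simp add: Eold_def)
        then show False using eO by contradiction
      qed
      have E2eq: "E2 = Eold \<union> (Enew - Eold)" by (auto simp: E2_def)
      have split2: "(\<Sum>e\<in>E2. w' e) = (\<Sum>e\<in>Eold. w' e) + (\<Sum>e\<in>Enew - Eold. w' e)"
        unfolding E2eq by (rule sum.union_disjoint) (use finEold finEnew in auto)
      have "(\<Sum>e\<in>Enew - Eold. w' e) = (\<Sum>e\<in>Enew - Eold. eucl_weight e)"
        by (intro sum.cong refl) (simp add: w'_def newE)
      also have "\<dots> \<le> (\<Sum>e\<in>Enew. eucl_weight e)"
      proof (rule sum_mono2[OF finEnew])
        show "Enew - Eold \<subseteq> Enew" by blast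
        show "\<And>b. b \<in> Enew - (Enew - Eold) \<Longrightarrow> 0 \<le> eucl_weight b"
          using sub2 eucl_weight_nonneg unfolding E2_def by blast
      qed
      also have "\<dots> \<le> (\<Sum>j\<in>N - {k}. eucl_weight {k, j})"
        unfolding Enew_def using sum_image_le[of "N - {k}" eucl_weight "\<lambda>j. {k, j}"] finN
        by (simp add: comp_def eucl_weight_eq)
      also have "\<dots> = (\<Sum>j\<in>N - {k}. dist k j)" by (simp add: eucl_weight_eq)
      also have "\<dots> \<le> (\<Sum>j\<in>N. dist k j)" by (rule sum_mono2) (use finN in auto)
      moreover have "(\<Sum>j\<in>N. dist k j) < \<gamma> * L" using lt0 by (simp add: L_def)
      ultimately have "(\<Sum>e\<in>E2. w' e) < (\<Sum>e\<in>E. w' e)" using split2 sumE by linarith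
      moreover have "finite (Vt - {s})" using finVt by simp
      moreover have "Vt - {s} \<noteq> {}" using kVt by blast
      moreover have "T \<subseteq> Vt - {s}" using TVt sT by blast
      moreover have "Vt - {s} \<subseteq> V" using VtV by blast
      ultimately show False using better[OF _ _ sub2 con2] by blast
    qed
  qed
  show False using geo[OF finN neN sN g32 A B] .
qed

end
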